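(* Let $\mathcal{H}$ be a complex Hilbert space, let $A\in\mathcal{B}(\mathcal{H})$ be a nonzero positive operator, and let $\mathbb{A}=\begin{pmatrix}A&O\\O&A\end{pmatrix}$ on $\mathcal{H}\oplus\mathcal{H}$. Let $T\in\mathcal{B}_A(\mathcal{H})$ and put $\Re_A(T)=\frac{T+T^{\sharp_A}}{2}$, $\Im_A(T)=\frac{T-T^{\sharp_A}}{2i}$. Then $$\omega_A(T)\leq 2\min\left\{\omega_{\mathbb{A}}\left[\begin{pmatrix}\Re_A(T)&O\\\Im_A(T)&O\end{pmatrix}\right],\ \omega_{\mathbb{A}}\left[\begin{pmatrix}O&-i\Im_A(T)\\\Re_A(T)&O\end{pmatrix}\right]\right\}.$$
   Context: For a positive operator $A$ on $\mathcal{H}$, $\langle x,y\rangle_A:=\langle Ax,y\rangle$ and $\|x\|_A:=\sqrt{\langle x,x\rangle_A}$. $\mathcal{B}_A(\mathcal{H})$ is the set of $T\in\mathcal{B}(\mathcal{H})$ with $\mathcal{R}(T^*A)\subseteq\mathcal{R}(A)$; for such $T$, $T^{\sharp_A}$ is the unique solution $X$ of $AX=T^*A$ with $\mathcal{R}(X)\subseteq\overline{\mathcal{R}(A)}$. $\omega_A(T):=\sup\{|\langle Tx,x\rangle_A|:x\in\mathcal{H},\|x\|_A=1\}$. $\omega_{\mathbb{A}}$ is defined analogously on $\mathcal{H}\oplus\mathcal{H}$ with $\langle (x_1,x_2),(y_1,y_2)\rangle_{\mathbb{A}}=\langle x_1,y_1\rangle_A+\langle x_2,y_2\rangle_A$.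 *)

theory Defs
  imports "HOL-Analysis.Analysis"
begin

class complex_vector = real_vector +
  fixes scaleC :: "complex \<Rightarrow> 'a \<Rightarrow> 'a" (infixr \<open>*\<^sub>C\<close> 75)
  assumes scaleC_add_right: "a *\<^sub>C (x + y) = a *\<^sub>C x + a *\<^sub>C y"
    and scaleC_add_left: "(a + b) *\<^sub>C x = a *\<^sub>C x + b *\<^sub>C x"
    and scaleC_scaleC: "a *\<^sub>C (b *\<^sub>C x) = (a * b) *\<^sub>C x"
    and scaleC_one: "1 *\<^sub>C x = x"
    and scaleR_scaleC: "scaleR r x = complex_of_real r *\<^sub>C x"

class complex_inner = complex_vector + real_normed_vector +
  fixes cinner :: "'a \<Rightarrow> 'a \<Rightarrow> complex"
  assumes cinner_add_left: "cinner (x + y) z = cinner x z + cinner y z"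
    and cinner_scaleC_left: "cinner (c *\<^sub>C x) y = c * cinner x y"
    and cinner_commute: "cinner x y = cnj (cinner y x)"
    and cinner_ge_zero: "0 \<le> Re (cinner x x)"
    and cinner_eq_zero_iff: "cinner x x = 0 \<longleftrightarrow> x = 0"
    and norm_eq_sqrt_cinner: "norm x = sqrt (Re (cinner x x))"

class chilbert_space = complex_inner + complete_space

definition clinear :: "('a::complex_vector \<Rightarrow> 'b::complex_vector) \<Rightarrow> bool" where
  "clinear T \<longleftrightarrow> (\<forall>x y. T (x + y) = T x + T y) \<and> (\<forall>c x. T (c *\<^sub>C x) = c *\<^sub>C T x)"

definition bounded_clinear :: "('a::complex_inner \<Rightarrow> 'b::complex_inner) \<Rightarrow> bool" where
  "bounded_clinear T \<longleftrightarrow> clinear T \<and> (\<exists>K. \<forall>x. norm (T x) \<le> norm x * K)"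

text \<open>Hilbert-space adjoint \<open>T\<^sup>*\<close> (exists uniquely for bounded \<open>T\<close> by Riesz).\<close>
definition cadjoint :: "('a::chilbert_space \<Rightarrow> 'a) \<Rightarrow> 'a \<Rightarrow> 'a" where
  "cadjoint T = (SOME S. \<forall>x y. cinner (T x) y = cinner x (S y))"

definition positive_op :: "('a::chilbert_space \<Rightarrow> 'a) \<Rightarrow> bool" where
  "positive_op A \<longleftrightarrow> bounded_clinear A \<and>
     (\<forall>x. Im (cinner (A x) x) = 0 \<and> 0 \<le> Re (cinner (A x) x))"

definition BA :: "('a::chilbert_space \<Rightarrow> 'a) \<Rightarrow> ('a \<Rightarrow> 'a) set" where
  "BA A = {T. bounded_clinear T \<and> range (cadjoint T \<circ> A) \<subseteq> range A}"

definition Asharp :: "('a::chilbert_space \<Rightarrow> 'a) \<Rightarrow> ('a \<Rightarrow> 'a) \<Rightarrow> 'a \<Rightarrow> 'a" where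
  "Asharp A T = (THE X. bounded_clinear X \<and> (\<forall>x. A (X x) = cadjoint T (A x))
                        \<and> range X \<subseteq> closure (range A))"

definition ReA :: "('a::chilbert_space \<Rightarrow> 'a) \<Rightarrow> ('a \<Rightarrow> 'a) \<Rightarrow> 'a \<Rightarrow> 'a" where
  "ReA A T = (\<lambda>x. (1/2) *\<^sub>C (T x + Asharp A T x))"

definition ImA :: "('a::chilbert_space \<Rightarrow> 'a) \<Rightarrow> ('a \<Rightarrow> 'a) \<Rightarrow> 'a \<Rightarrow> 'a" where
  "ImA A T = (\<lambda>x. (1 / (2 * \<i>)) *\<^sub>C (T x - Asharp A T x))"

definition A_inner :: "('a::chilbert_space \<Rightarrow> 'a) \<Rightarrow> 'a \<Rightarrow> 'a \<Rightarrow> complex" where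
  "A_inner A x y = cinner (A x) y"

definition A_norm :: "('a::chilbert_space \<Rightarrow> 'a) \<Rightarrow> 'a \<Rightarrow> real" where
  "A_norm A x = sqrt (Re (A_inner A x x))"

definition omegaA :: "('a::chilbert_space \<Rightarrow> 'a) \<Rightarrow> ('a \<Rightarrow> 'a) \<Rightarrow> real" where
  "omegaA A T = Sup {cmod (A_inner A (T x) x) | x. A_norm A x = 1}"

text \<open>On \<open>H \<oplus> H\<close> (modelled as \<open>'a \<times> 'a\<close>) with \<open>\<bbbA> = diag(A, A)\<close>.\<close>
definition AA_inner :: "('a::chilbert_space \<Rightarrow> 'a) \<Rightarrow> 'a \<times> 'a \<Rightarrow> 'a \<times> 'a \<Rightarrow> complex" where
  "AA_inner A x y = A_inner A (fst x) (fst y) + A_inner A (snd x) (snd y)"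

definition AA_norm :: "('a::chilbert_space \<Rightarrow> 'a) \<Rightarrow> 'a \<times> 'a \<Rightarrow> real" where
  "AA_norm A x = sqrt (Re (AA_inner A x x))"

definition omegaAA :: "('a::chilbert_space \<Rightarrow> 'a) \<Rightarrow> ('a \<times> 'a \<Rightarrow> 'a \<times> 'a) \<Rightarrow> real" where
  "omegaAA A M = Sup {cmod (AA_inner A (M x) x) | x. AA_norm A x = 1}"

definition opmat :: "('a::complex_vector \<Rightarrow> 'a) \<Rightarrow> ('a \<Rightarrow> 'a) \<Rightarrow> ('a \<Rightarrow> 'a) \<Rightarrow> ('a \<Rightarrow> 'a)
                     \<Rightarrow> 'a \<times> 'a \<Rightarrow> 'a \<times> 'a" where
  "opmat T11 T12 T21 T22 = (\<lambda>(x1, x2). (T11 x1 + T12 x2, T21 x1 + T22 x2))"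

end

theory Submission
  imports Defs
begin



section \<open>Basic complex vector and inner product facts\<close>

lemma scaleC_of_real: "complex_of_real r *\<^sub>C (x::'a::complex_vector) = r *\<^sub>R x"
  by (simp add: scaleR_scaleC)

lemma scaleC_zero_left [simp]: "0 *\<^sub>C (x::'a::complex_vector) = 0"
  using scaleC_of_real[of 0 x] by simp

lemma scaleC_zero_right [simp]: "c *\<^sub>C (0::'a::complex_vector) = 0"
  using scaleC_add_right[of c 0 0] by simp

lemma scaleC_minus_left: "(- c) *\<^sub>C (x::'a::complex_vector) = - (c *\<^sub>C x)"
  using scaleC_add_left[of c "-c" x] by (simp add: add_eq_0_iff)

lemma scaleC_minus_right: "c *\<^sub>C (- x::'a::complex_vector) = - (c *\<^sub>C x)"
  using scaleC_add_right[of c x "-x"] by (simp add: add_eq_0_iff)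

lemma scaleC_diff_right: "c *\<^sub>C (x - y::'a::complex_vector) = c *\<^sub>C x - c *\<^sub>C y"
  by (metis diff_conv_add_uminus scaleC_add_right scaleC_minus_right)

lemma scaleC_diff_left: "(a - b) *\<^sub>C (x::'a::complex_vector) = a *\<^sub>C x - b *\<^sub>C x"
  by (metis diff_conv_add_uminus scaleC_add_left scaleC_minus_left)

lemma scaleC_eq_0_iff: "c *\<^sub>C (x::'a::complex_vector) = 0 \<longleftrightarrow> c = 0 \<or> x = 0"
proof
  assume h: "c *\<^sub>C x = 0"
  show "c = 0 \<or> x = 0"
  proof (cases "c = 0")
    case False
    have "x = (inverse c * c) *\<^sub>C x" using False by (simp add: scaleC_one)
    also have "\<dots> = inverse c *\<^sub>C (c *\<^sub>C x)" by (rule scaleC_scaleC[symmetric])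
    also have "\<dots> = 0" using h by simp
    finally show ?thesis by simp
  qed simp
qed auto

lemma cinner_zero_left [simp]: "cinner 0 (y::'a::complex_inner) = 0"
  using cinner_add_left[of 0 0 y] by simp

lemma cinner_zero_right [simp]: "cinner (x::'a::complex_inner) 0 = 0"
  using cinner_commute[of x 0] by simp

lemma cinner_add_right: "cinner (x::'a::complex_inner) (y + z) = cinner x y + cinner x z"
  using cinner_commute[of x "y+z"] cinner_commute[of y x] cinner_commute[of z x]
  by (simp add: cinner_add_left)

lemma cinner_scaleC_right: "cinner (x::'a::complex_inner) (c *\<^sub>C y) = cnj c * cinner x y"
  using cinner_commute[of x "c *\<^sub>C y"] cinner_commute[of y x]
  by (simp add: cinner_scaleC_left)

lemma cinner_minus_left: "cinner (- x::'a::complex_inner) y = - cinner x y"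
  using cinner_add_left[of x "-x" y] by (simp add: add_eq_0_iff)

lemma cinner_minus_right: "cinner (x::'a::complex_inner) (- y) = - cinner x y"
  using cinner_add_right[of x y "-y"] by (simp add: add_eq_0_iff)

lemma cinner_diff_left: "cinner (x - y::'a::complex_inner) z = cinner x z - cinner y z"
  by (simp only: cinner_add_left cinner_minus_left diff_conv_add_uminus)

lemma cinner_diff_right: "cinner (x::'a::complex_inner) (y - z) = cinner x y - cinner x z"
  by (simp only: cinner_add_right cinner_minus_right diff_conv_add_uminus)

lemma cinner_self: "cinner (x::'a::complex_inner) x = complex_of_real ((norm x)\<^sup>2)"
proof -
  have "Im (cinner x x) = 0"
    using cinner_commute[of x x] by (simp add: complex_eq_iff)
  moreover have "Re (cinner x x) = (norm x)\<^sup>2"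
    by (simp add: norm_eq_sqrt_cinner cinner_ge_zero)
  ultimately show ?thesis by (simp add: complex_eq_iff)
qed

lemma norm_sq_cinner: "(norm (x::'a::complex_inner))\<^sup>2 = Re (cinner x x)"
  by (simp add: cinner_self)

lemma norm_scaleC: "norm (c *\<^sub>C (x::'a::complex_inner)) = cmod c * norm x"
proof -
  have "cinner (c *\<^sub>C x) (c *\<^sub>C x) = (c * cnj c) * cinner x x"
    by (simp add: cinner_scaleC_left cinner_scaleC_right mult.assoc)
  also have "\<dots> = complex_of_real ((cmod c)\<^sup>2 * (norm x)\<^sup>2)"
    by (simp add: complex_norm_square[symmetric] cinner_self)
  finally have "(norm (c *\<^sub>C x))\<^sup>2 = (cmod c * norm x)\<^sup>2"
    by (simp add: norm_sq_cinner power_mult_distrib)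
  then show ?thesis by (simp add: power2_eq_iff_nonneg)
qed

lemma cinner_eq_all: "(\<And>x. cinner x a = cinner x (b::'a::complex_inner)) \<Longrightarrow> a = b"
proof -
  assume h: "\<And>x. cinner x a = cinner x b"
  have "cinner (a - b) (a - b) = 0" using h[of "a - b"] by (simp add: cinner_diff_right)
  then show ?thesis by (simp add: cinner_eq_zero_iff)
qed

text \<open>A real lemma used for Cauchy-Schwarz and for orthogonality.\<close>
lemma quad_lemma:
  fixes p s q :: real
  assumes "s \<ge> 0" and "q \<ge> 0" and h: "\<And>t. 0 \<le> p - 2 * t * s + t\<^sup>2 * s * q"
  shows "s \<le> p * q"
proof (cases "q = 0")
  case True
  have "s \<le> 0"
  proof (rule ccontr)
    assume "\<not> s \<le> 0"
    then have "s > 0" by simp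
    have "0 \<le> p - 2 * ((\<bar>p\<bar> + 1) / s) * s" using h[of "(\<bar>p\<bar> + 1) / s"] True by simp
    also have "\<dots> = p - 2 * (\<bar>p\<bar> + 1)" using \<open>s > 0\<close> by simp
    finally show False by (smt (verit))
  qed
  then show ?thesis using True assms by simp
next
  case False
  then have "q > 0" using assms by simp
  have "0 \<le> p - 2 * (1/q) * s + (1/q)\<^sup>2 * s * q" using h by blast
  also have "\<dots> = p - s / q" using \<open>q > 0\<close> by (simp add: power2_eq_square field_simps)
  finally have "s / q \<le> p" by simp
  then show ?thesis using \<open>q > 0\<close> by (simp add: field_simps mult.commute)
qed

lemma sesq_CS:
  fixes B :: "'a::complex_vector \<Rightarrow> 'a \<Rightarrow> complex"
  assumes add: "\<And>x y z. B (x + y) z = B x z + B y z"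
    and scal: "\<And>c x y. B (c *\<^sub>C x) y = c * B x y"
    and herm: "\<And>x y. B x y = cnj (B y x)"
    and pos: "\<And>x. 0 \<le> Re (B x x)"
  shows "(cmod (B x y))\<^sup>2 \<le> Re (B x x) * Re (B y y)"
proof -
  have addr: "B x (y + z) = B x y + B x z" for x y z
    using herm[of x "y + z"] add[of y z x] herm[of y x] herm[of z x] by simp
  have scalr: "B x (c *\<^sub>C y) = cnj c * B x y" for c x y
    using herm[of x "c *\<^sub>C y"] scal[of c y x] herm[of y x] by simp
  have real: "B z z = complex_of_real (Re (B z z))" for z
    using herm[of z z] by (simp add: complex_eq_iff)
  define a where "a = B x y"
  have ba: "B y x = cnj a" unfolding a_def by (rule herm)
  have key: "0 \<le> Re (B x x) - 2 * t * (cmod a)\<^sup>2 + t\<^sup>2 * (cmod a)\<^sup>2 * Re (B y y)" for t :: real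
  proof -
    define c where "c = - complex_of_real t * a"
    have "B (x + c *\<^sub>C y) (x + c *\<^sub>C y) = B x x + cnj c * a + c * (cnj a + cnj c * B y y)"
      unfolding add addr scal scalr ba a_def[symmetric] by (simp add: ring_distribs)
    also have "\<dots> = B x x - 2 * complex_of_real t * (a * cnj a)
          + complex_of_real (t\<^sup>2) * (a * cnj a) * B y y"
      unfolding c_def by (simp add: power2_eq_square ring_distribs mult.commute mult.left_commute)
    also have "\<dots> = B x x - 2 * complex_of_real t * complex_of_real ((cmod a)\<^sup>2)
          + complex_of_real (t\<^sup>2) * complex_of_real ((cmod a)\<^sup>2) * B y y"
      by (simp only: complex_norm_square)
    finally have "Re (B (x + c *\<^sub>C y) (x + c *\<^sub>C y)) =
        Re (B x x) - 2 * t * (cmod a)\<^sup>2 + t\<^sup>2 * (cmod a)\<^sup>2 * Re (B y y)"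
      by simp
    moreover have "0 \<le> Re (B (x + c *\<^sub>C y) (x + c *\<^sub>C y))" by (rule pos)
    ultimately show ?thesis by simp
  qed
  have "(cmod a)\<^sup>2 \<le> Re (B x x) * Re (B y y)"
    by (rule quad_lemma[OF _ _ key]) (simp_all add: pos)
  then show ?thesis by (simp add: a_def)
qed

lemma cinner_CS: "cmod (cinner x (y::'a::complex_inner)) \<le> norm x * norm y"
proof -
  have "(cmod (cinner x y))\<^sup>2 \<le> (norm x * norm y)\<^sup>2"
    using sesq_CS[OF cinner_add_left cinner_scaleC_left cinner_commute cinner_ge_zero, of x y]
    by (simp add: norm_sq_cinner power_mult_distrib)
  then show ?thesis by (simp add: power2_le_iff_abs_le)
qed




section \<open>Linear operators\<close>

lemma clinear_add: "clinear T \<Longrightarrow> T (x + y) = T x + T y"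
  by (simp add: clinear_def)

lemma clinear_scaleC: "clinear T \<Longrightarrow> T (c *\<^sub>C x) = c *\<^sub>C T x"
  by (simp add: clinear_def)

lemma clinear_0: "clinear T \<Longrightarrow> T 0 = 0"
  using clinear_add[of T 0 0] by simp

lemma scaleC_minus1: "(-1) *\<^sub>C (x::'a::complex_vector) = - x"
  by (simp add: scaleC_minus_left scaleC_one)

lemma clinear_minus: "clinear T \<Longrightarrow> T (- x) = - T x"
  by (metis clinear_scaleC scaleC_minus1)

lemma clinear_diff: "clinear T \<Longrightarrow> T (x - y) = T x - T y"
  by (simp only: diff_conv_add_uminus clinear_add clinear_minus)

lemma clinear_scaleR: "clinear T \<Longrightarrow> T (r *\<^sub>R x) = r *\<^sub>R T x"
  by (simp add: scaleR_scaleC clinear_scaleC)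

lemma bounded_clinear_clinear: "bounded_clinear T \<Longrightarrow> clinear T"
  by (simp add: bounded_clinear_def)

lemma bounded_clinear_bound:
  assumes "bounded_clinear T"
  obtains K where "K > 0" "\<And>x. norm (T x) \<le> norm x * K"
proof -
  obtain K where K: "\<And>x. norm (T x) \<le> norm x * K"
    using assms unfolding bounded_clinear_def by blast
  have "norm (T x) \<le> norm x * (max K 0 + 1)" for x
    using K[of x] by (smt (verit) mult_left_mono norm_ge_zero)
  then show ?thesis using that[of "max K 0 + 1"] by simp
qed

lemma bounded_clinear_linear: "bounded_clinear T \<Longrightarrow> bounded_linear T"
proof -
  assume a: "bounded_clinear T"
  then obtain K where K: "\<And>x. norm (T x) \<le> norm x * K" by (metis bounded_clinear_bound)
  show ?thesis
    by (rule bounded_linear_intro[OF _ _ K])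
       (use a in \<open>auto simp: bounded_clinear_clinear clinear_add clinear_scaleR\<close>)
qed

lemma bounded_clinear_tendsto:
  "bounded_clinear T \<Longrightarrow> (f \<longlongrightarrow> a) F \<Longrightarrow> ((\<lambda>n. T (f n)) \<longlongrightarrow> T a) F"
  by (rule bounded_linear.tendsto[OF bounded_clinear_linear])

section \<open>Positive operators\<close>

context
  fixes A :: "'a::chilbert_space \<Rightarrow> 'a"
  assumes posA: "positive_op A"
begin

lemma A_bcl: "bounded_clinear A"
  using posA by (simp add: positive_op_def)

lemma A_lin: "clinear A"
  using A_bcl by (simp add: bounded_clinear_def)

lemma A_Im: "Im (cinner (A x) x) = 0"
  using posA by (simp add: positive_op_def)

lemma A_Re: "0 \<le> Re (cinner (A x) x)"
  using posA by (simp add: positive_op_def)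

lemma A_real: "cinner (A x) x = complex_of_real (Re (cinner (A x) x))"
  using A_Im[of x] by (simp add: complex_eq_iff)

lemma A_herm: "cinner (A x) y = cinner x (A y)"
proof -
  define a where "a = cinner (A x) y"
  define b where "b = cinner (A y) x"
  have e1: "cinner (A (x + y)) (x + y) = cinner (A x) x + a + b + cinner (A y) y"
    by (simp add: clinear_add[OF A_lin] cinner_add_left cinner_add_right a_def b_def)
  have "Im (cinner (A (x + y)) (x + y)) = 0" by (rule A_Im)
  then have i1: "Im a + Im b = 0" unfolding e1 using A_Im[of x] A_Im[of y] by simp
  have e2: "cinner (A (x + \<i> *\<^sub>C y)) (x + \<i> *\<^sub>C y) =
      cinner (A x) x + (- \<i>) * a + \<i> * b + cinner (A y) y"
    by (simp add: clinear_add[OF A_lin] clinear_scaleC[OF A_lin] cinner_add_left cinner_add_right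
        cinner_scaleC_left cinner_scaleC_right a_def b_def algebra_simps)
  have "Im (cinner (A (x + \<i> *\<^sub>C y)) (x + \<i> *\<^sub>C y)) = 0" by (rule A_Im)
  then have i2: "Re b - Re a = 0" unfolding e2 using A_Im[of x] A_Im[of y] by simp
  have "a = cnj b" using i1 i2 by (simp add: complex_eq_iff)
  then show ?thesis using cinner_commute[of x "A y"] by (simp add: a_def b_def)
qed

lemma A_form_herm: "cinner (A x) y = cnj (cinner (A y) x)"
  by (simp add: A_herm cinner_commute[of x "A y"])

lemma A_CS_sq: "(cmod (cinner (A x) y))\<^sup>2 \<le> Re (cinner (A x) x) * Re (cinner (A y) y)"
  apply (rule sesq_CS[where B="\<lambda>u v. cinner (A u) v"])
     apply (simp add: clinear_add[OF A_lin] cinner_add_left)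
    apply (simp add: clinear_scaleC[OF A_lin] cinner_scaleC_left)
   apply (rule A_form_herm)
  apply (rule A_Re)
  done

lemma A_norm_sq: "(A_norm A x)\<^sup>2 = Re (cinner (A x) x)"
  unfolding A_norm_def A_inner_def using A_Re[of x] by simp

lemma A_norm_nonneg: "0 \<le> A_norm A x"
  unfolding A_norm_def A_inner_def using A_Re[of x] by simp

lemma A_CS: "cmod (cinner (A x) y) \<le> A_norm A x * A_norm A y"
proof -
  have "(cmod (cinner (A x) y))\<^sup>2 \<le> (A_norm A x * A_norm A y)\<^sup>2"
    using A_CS_sq[of x y] by (simp add: power_mult_distrib A_norm_sq)
  then show ?thesis
    using A_norm_nonneg[of x] A_norm_nonneg[of y] by (simp add: power2_le_iff_abs_le)
qed

lemma A_inner_self: "cinner (A x) x = complex_of_real ((A_norm A x)\<^sup>2)"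
  by (subst A_real) (simp add: A_norm_sq)

lemma A_norm_scaleC: "A_norm A (c *\<^sub>C x) = cmod c * A_norm A x"
proof -
  have "cinner (A (c *\<^sub>C x)) (c *\<^sub>C x) = (c * cnj c) * cinner (A x) x"
    by (simp add: clinear_scaleC[OF A_lin] cinner_scaleC_left cinner_scaleC_right mult.assoc)
  also have "\<dots> = complex_of_real ((cmod c)\<^sup>2 * (A_norm A x)\<^sup>2)"
    by (simp add: complex_norm_square[symmetric] A_inner_self)
  finally have "(A_norm A (c *\<^sub>C x))\<^sup>2 = (cmod c * A_norm A x)\<^sup>2"
    by (simp add: A_norm_sq power_mult_distrib)
  then show ?thesis using A_norm_nonneg by (simp add: power2_eq_iff_nonneg)
qed

lemma A_zero_if_norm0: "A_norm A x = 0 \<Longrightarrow> A x = 0"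
proof -
  assume h: "A_norm A x = 0"
  have "cmod (cinner (A x) (A x)) \<le> A_norm A x * A_norm A (A x)" by (rule A_CS)
  then have "cinner (A x) (A x) = 0" using h A_norm_nonneg[of "A x"] by simp
  then show ?thesis by (simp add: cinner_eq_zero_iff)
qed

lemma A_norm_le:
  obtains C where "C > 0" "\<And>x. A_norm A x \<le> C * norm x"
proof -
  obtain K where K: "K > 0" "\<And>x. norm (A x) \<le> norm x * K"
    using A_bcl bounded_clinear_bound by blast
  have "A_norm A x \<le> sqrt K * norm x" for x
  proof -
    have "(A_norm A x)\<^sup>2 \<le> cmod (cinner (A x) x)"
      using A_norm_sq[of x] by (simp add: complex_Re_le_cmod)
    also have "\<dots> \<le> norm (A x) * norm x" by (rule cinner_CS)
    also have "\<dots> \<le> norm x * K * norm x" using K(2)[of x] by (simp add: mult_right_mono)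
    also have "\<dots> = (sqrt K * norm x)\<^sup>2" using K(1) by (simp add: power_mult_distrib power2_eq_square)
    finally show ?thesis
      using A_norm_nonneg[of x] K(1) by (simp add: power2_le_iff_abs_le)
  qed
  then show ?thesis using that[of "sqrt K"] K(1) by simp
qed

end




section \<open>Projection theorem and Riesz representation\<close>

definition csubspace :: "'a::complex_vector set \<Rightarrow> bool" where
  "csubspace M \<longleftrightarrow> 0 \<in> M \<and> (\<forall>x\<in>M. \<forall>y\<in>M. x + y \<in> M) \<and> (\<forall>c. \<forall>x\<in>M. c *\<^sub>C x \<in> M)"

lemma norm_add_scaleC_sq:
  "(norm (x + c *\<^sub>C y))\<^sup>2 = (norm x)\<^sup>2 + 2 * Re (cnj c * cinner x y) + (cmod c)\<^sup>2 * (norm (y::'a::complex_inner))\<^sup>2"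
proof -
  have "cinner (x + c *\<^sub>C y) (x + c *\<^sub>C y) = cinner x x + cnj c * cinner x y + c * cinner y x + (c * cnj c) * cinner y y"
    by (simp add: cinner_add_left cinner_add_right cinner_scaleC_left cinner_scaleC_right algebra_simps)
  moreover have "Re (c * cinner y x) = Re (cnj c * cinner x y)"
    using cinner_commute[of y x] by (metis complex_cnj_cnj complex_cnj_mult cnj.sel(1))
  moreover have "Re ((c * cnj c) * cinner y y) = (cmod c)\<^sup>2 * (norm y)\<^sup>2"
    by (simp add: complex_norm_square[symmetric] cinner_self)
  ultimately show ?thesis by (simp add: norm_sq_cinner)
qed

lemma parallelogram:
  "(norm (a + b))\<^sup>2 + (norm (a - b))\<^sup>2 = 2 * (norm a)\<^sup>2 + 2 * (norm (b::'a::complex_inner))\<^sup>2"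
  using norm_add_scaleC_sq[of a 1 b] norm_add_scaleC_sq[of a "-1" b]
  by (simp add: scaleC_one scaleC_minus1)

lemma projection:
  fixes M :: "'a::chilbert_space set" and w :: 'a
  assumes clM: "closed M" and sM: "csubspace M"
  shows "\<exists>m\<in>M. \<forall>v\<in>M. cinner (w - m) v = 0"
proof -
  have M0: "0 \<in> M" and Madd: "\<And>x y. x \<in> M \<Longrightarrow> y \<in> M \<Longrightarrow> x + y \<in> M"
    and Mscal: "\<And>c x. x \<in> M \<Longrightarrow> c *\<^sub>C x \<in> M"
    using sM by (auto simp: csubspace_def)
  define D where "D = (\<lambda>m. norm (w - m)) ` M"
  define d where "d = Inf D"
  have Dne: "D \<noteq> {}" using M0 by (auto simp: D_def)
  have Dbdd: "bdd_below D" unfolding D_def by (rule bdd_belowI[of _ 0]) auto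
  have dle: "d \<le> norm (w - m)" if "m \<in> M" for m
    unfolding d_def by (rule cInf_lower) (use that Dbdd in \<open>auto simp: D_def\<close>)
  have d0: "0 \<le> d" unfolding d_def by (rule cInf_greatest[OF Dne]) (auto simp: D_def)
  define e where "e = (\<lambda>n::nat. inverse (real (Suc n)))"
  have e_pos: "0 < e n" and e_le1: "e n \<le> 1" for n
    by (auto simp: e_def field_simps)
  have "\<exists>m\<in>M. norm (w - m) < d + e n" for n
  proof -
    have "Inf D < d + e n" using e_pos[of n] by (simp add: d_def)
    from cInf_lessD[OF Dne this] show ?thesis by (auto simp: D_def)
  qed
  then obtain ms where ms: "\<And>n. ms n \<in> M" "\<And>n. norm (w - ms n) < d + e n"
    by metis
  have sqb: "(norm (w - ms k))\<^sup>2 \<le> d\<^sup>2 + (2 * d + 1) * e k" for k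
  proof -
    have "(norm (w - ms k))\<^sup>2 \<le> (d + e k)\<^sup>2"
      using ms(2)[of k] by (intro power_mono) auto
    also have "\<dots> = d\<^sup>2 + 2 * d * e k + e k * e k" by (simp add: power2_eq_square algebra_simps)
    also have "\<dots> \<le> d\<^sup>2 + 2 * d * e k + 1 * e k"
      using e_le1[of k] e_pos[of k] by (intro add_left_mono mult_right_mono) auto
    finally show ?thesis by (simp add: algebra_simps)
  qed
  have bnd: "(norm (ms k - ms l))\<^sup>2 \<le> (4 * d + 2) * (e k + e l)" for k l
  proof -
    define mid where "mid = complex_of_real (1/2) *\<^sub>C (ms k + ms l)"
    have "mid \<in> M" unfolding mid_def using ms(1) by (intro Mscal Madd)
    then have "2 * d \<le> 2 * norm (w - mid)" using dle by simp
    also have "2 * norm (w - mid) = norm ((w - ms k) + (w - ms l))"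
    proof -
      have "(w - ms k) + (w - ms l) = 2 *\<^sub>R (w - mid)"
        unfolding mid_def scaleC_of_real by (simp add: algebra_simps scaleR_add_right scaleR_2)
      then show ?thesis by simp
    qed
    finally have "2 * d \<le> norm ((w - ms k) + (w - ms l))" .
    then have "(2 * d)\<^sup>2 \<le> (norm ((w - ms k) + (w - ms l)))\<^sup>2"
      using d0 by (intro power_mono) auto
    moreover have "(norm ((w - ms k) + (w - ms l)))\<^sup>2 + (norm ((w - ms k) - (w - ms l)))\<^sup>2
        = 2 * (norm (w - ms k))\<^sup>2 + 2 * (norm (w - ms l))\<^sup>2" by (rule parallelogram)
    moreover have "norm ((w - ms k) - (w - ms l)) = norm (ms k - ms l)"
      by (metis diff_diff_eq2 diff_add_cancel norm_minus_commute add_diff_cancel_left')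
    ultimately show ?thesis using sqb[of k] sqb[of l]
      by (simp add: power2_eq_square algebra_simps)
  qed
  have "Cauchy ms"
  proof (rule CauchyI)
    fix \<epsilon> :: real assume "0 < \<epsilon>"
    then have "0 < \<epsilon>\<^sup>2 / (8 * d + 4)" using d0 by simp
    then obtain N :: nat where N: "N > 0" "inverse (real N) < \<epsilon>\<^sup>2 / (8 * d + 4)"
      using ex_inverse_of_nat_less by blast
    have "norm (ms k - ms l) < \<epsilon>" if "k \<ge> N" "l \<ge> N" for k l
    proof -
      have ek: "e k \<le> inverse (real N)" "e l \<le> inverse (real N)"
        using that N(1) by (auto simp: e_def intro!: le_imp_inverse_le)
      have "(norm (ms k - ms l))\<^sup>2 \<le> (4 * d + 2) * (e k + e l)" by (rule bnd)
      also have "\<dots> \<le> (4 * d + 2) * (2 * inverse (real N))"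
        using ek d0 by (intro mult_left_mono) auto
      also have "\<dots> = (8 * d + 4) * inverse (real N)" by (simp add: algebra_simps)
      also have "\<dots> < (8 * d + 4) * (\<epsilon>\<^sup>2 / (8 * d + 4))"
        using N(2) d0 by (intro mult_strict_left_mono) auto
      also have "\<dots> = \<epsilon>\<^sup>2" using d0 by simp
      finally show ?thesis using \<open>0 < \<epsilon>\<close> by (simp add: power2_less_imp_less)
    qed
    then show "\<exists>M. \<forall>m\<ge>M. \<forall>n\<ge>M. norm (ms m - ms n) < \<epsilon>" by blast
  qed
  then obtain m where lim: "ms \<longlonglongrightarrow> m"
    using Cauchy_convergent convergent_def by blast
  have mM: "m \<in> M" by (rule closed_sequentially[OF clM ms(1) lim])
  have "norm (w - m) \<le> d"
  proof (rule LIMSEQ_le)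
    show "(\<lambda>n. norm (w - ms n)) \<longlonglongrightarrow> norm (w - m)"
      by (intro tendsto_intros lim)
    show "(\<lambda>n. d + e n) \<longlonglongrightarrow> d"
      using tendsto_add[OF tendsto_const LIMSEQ_inverse_real_of_nat, of d] by (simp add: e_def)
    show "\<exists>N. \<forall>n\<ge>N. norm (w - ms n) \<le> d + e n" using ms(2) less_imp_le by blast
  qed
  then have minim: "norm (w - m) \<le> norm (w - v)" if "v \<in> M" for v
    using dle[OF that] by simp
  have "cinner (w - m) v = 0" if vM: "v \<in> M" for v
  proof -
    define a where "a = cinner (w - m) v"
    have "0 \<le> 0 - 2 * t * (cmod a)\<^sup>2 + t\<^sup>2 * (cmod a)\<^sup>2 * (norm v)\<^sup>2" for t :: real
    proof -
      define c where "c = - (complex_of_real t * a)"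
      have "m - c *\<^sub>C v \<in> M"
        using mM vM by (metis Mscal Madd scaleC_minus1 scaleC_scaleC diff_conv_add_uminus)
      then have "(norm (w - m))\<^sup>2 \<le> (norm (w - (m - c *\<^sub>C v)))\<^sup>2"
        using minim norm_ge_zero power_mono by blast
      also have "w - (m - c *\<^sub>C v) = (w - m) + c *\<^sub>C v" by simp
      also have "(norm \<dots>)\<^sup>2 = (norm (w - m))\<^sup>2 + 2 * Re (cnj c * a) + (cmod c)\<^sup>2 * (norm v)\<^sup>2"
        unfolding a_def by (rule norm_add_scaleC_sq)
      also have "Re (cnj c * a) = - t * (cmod a)\<^sup>2"
        unfolding cmod_power2 by (simp add: c_def algebra_simps power2_eq_square)
      also have "(cmod c)\<^sup>2 = t\<^sup>2 * (cmod a)\<^sup>2"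
        by (simp add: c_def norm_mult power_mult_distrib)
      finally show ?thesis by simp
    qed
    then have "(cmod a)\<^sup>2 \<le> 0 * (norm v)\<^sup>2"
      by (intro quad_lemma) auto
    then show ?thesis by (simp add: a_def)
  qed
  then show ?thesis using mM by blast
qed




lemma riesz:
  fixes f :: "'a::chilbert_space \<Rightarrow> complex"
  assumes fadd: "\<And>x y. f (x + y) = f x + f y" and fscal: "\<And>c x. f (c *\<^sub>C x) = c * f x"
    and fbd: "\<And>x. cmod (f x) \<le> norm x * K"
  shows "\<exists>z. \<forall>x. f x = cinner x z"
proof (cases "\<forall>x. f x = 0")
  case True
  then show ?thesis by (intro exI[of _ 0]) simp
next
  case False
  then obtain u where u: "f u \<noteq> 0" by blast
  have fminus: "f (- x) = - f x" for x
    using fscal[of "-1" x] by (simp add: scaleC_minus1)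
  have fdiff: "f (x - y) = f x - f y" for x y
    by (simp only: diff_conv_add_uminus fadd fminus)
  have bl: "bounded_linear f"
    by (rule bounded_linear_intro[OF fadd _ fbd])
       (simp add: scaleR_scaleC fscal scaleR_conv_of_real)
  define N where "N = {x. f x = 0}"
  have clN: "closed N" unfolding N_def
    by (rule closed_Collect_eq) (auto intro: linear_continuous_on bl)
  have f0: "f 0 = 0" using fscal[of 0 0] by simp
  have sN: "csubspace N" unfolding N_def csubspace_def
    using fadd fscal f0 by simp
  obtain m where mN: "m \<in> N" and orth: "\<And>v. v \<in> N \<Longrightarrow> cinner (u - m) v = 0"
    using projection[OF clN sN, of u] by blast
  define n where "n = u - m"
  have fn: "f n = f u" using mN by (simp add: n_def fdiff N_def)
  have "n \<noteq> 0" using fn u f0 by auto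
  then have nn: "(norm n)\<^sup>2 \<noteq> 0" by simp
  define z where "z = (cnj (f n) / complex_of_real ((norm n)\<^sup>2)) *\<^sub>C n"
  have "f x = cinner x z" for x
  proof -
    define y where "y = x - (f x / f n) *\<^sub>C n"
    have "f y = f x - (f x / f n) * f n" by (simp add: y_def fdiff fscal)
    then have "f y = 0" using u fn by simp
    then have "cinner n y = 0" using orth[of y] by (simp add: N_def n_def)
    then have "cinner n x = cnj (f x / f n) * complex_of_real ((norm n)\<^sup>2)"
      by (simp add: y_def cinner_diff_right cinner_scaleC_right cinner_self)
    then have "cinner x n = (f x / f n) * complex_of_real ((norm n)\<^sup>2)"
      using cinner_commute[of x n] by simp
    moreover have "cinner x z = f n / complex_of_real ((norm n)\<^sup>2) * cinner x n"
      by (simp add: z_def cinner_scaleC_right)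
    ultimately show ?thesis using u fn nn by (simp add: field_simps)
  qed
  then show ?thesis by blast
qed

lemma adjoint_exists:
  fixes T :: "'a::chilbert_space \<Rightarrow> 'a"
  assumes "bounded_clinear T"
  shows "\<exists>S. \<forall>x y. cinner (T x) y = cinner x (S y)"
proof -
  obtain K where K: "K > 0" "\<And>x. norm (T x) \<le> norm x * K"
    using assms bounded_clinear_bound by blast
  have lin: "clinear T" using assms by (rule bounded_clinear_clinear)
  have "\<exists>z. \<forall>x. cinner (T x) y = cinner x z" for y
  proof (rule riesz[where K="K * norm y"])
    show "cinner (T (x1 + x2)) y = cinner (T x1) y + cinner (T x2) y" for x1 x2
      by (simp add: clinear_add[OF lin] cinner_add_left)
    show "cinner (T (c *\<^sub>C x)) y = c * cinner (T x) y" for c x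
      by (simp add: clinear_scaleC[OF lin] cinner_scaleC_left)
    show "cmod (cinner (T x) y) \<le> norm x * (K * norm y)" for x
    proof -
      have "cmod (cinner (T x) y) \<le> norm (T x) * norm y" by (rule cinner_CS)
      also have "\<dots> \<le> norm x * K * norm y" using K(2)[of x] by (simp add: mult_right_mono)
      finally show ?thesis by (simp add: mult.assoc)
    qed
  qed
  then show ?thesis by metis
qed

lemma cadjoint_prop:
  fixes T :: "'a::chilbert_space \<Rightarrow> 'a"
  assumes "bounded_clinear T"
  shows "cinner (T x) y = cinner x (cadjoint T y)"
proof -
  have "\<forall>x y. cinner (T x) y = cinner x (cadjoint T y)"
    unfolding cadjoint_def by (rule someI_ex[OF adjoint_exists[OF assms]])
  then show ?thesis by blast
qed

lemma cadjoint_bcl: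
  fixes T :: "'a::chilbert_space \<Rightarrow> 'a"
  assumes bT: "bounded_clinear T"
  shows "bounded_clinear (cadjoint T)"
proof -
  let ?S = "cadjoint T"
  obtain K where K: "K > 0" "\<And>x. norm (T x) \<le> norm x * K"
    using bT bounded_clinear_bound by blast
  have lin: "clinear T" using bT by (rule bounded_clinear_clinear)
  have add: "?S (x + y) = ?S x + ?S y" for x y
    by (rule cinner_eq_all) (simp add: cadjoint_prop[OF bT, symmetric] cinner_add_right)
  have scal: "?S (c *\<^sub>C x) = c *\<^sub>C ?S x" for c x
    by (rule cinner_eq_all) (simp add: cadjoint_prop[OF bT, symmetric] cinner_scaleC_right)
  have bd: "norm (?S y) \<le> norm y * K" for y
  proof -
    have "(norm (?S y))\<^sup>2 = Re (cinner (?S y) (?S y))" by (rule norm_sq_cinner)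
    also have "\<dots> = Re (cinner (T (?S y)) y)"
      using cadjoint_prop[OF bT, of "?S y" y] cinner_commute by (metis cnj.sel(1))
    also have "\<dots> \<le> cmod (cinner (T (?S y)) y)" by (rule complex_Re_le_cmod)
    also have "\<dots> \<le> norm (T (?S y)) * norm y" by (rule cinner_CS)
    also have "\<dots> \<le> norm (?S y) * K * norm y" using K(2) by (simp add: mult_right_mono)
    finally have h: "(norm (?S y))\<^sup>2 \<le> norm (?S y) * (norm y * K)" by (simp add: algebra_simps)
    show ?thesis
    proof (cases "norm (?S y) = 0")
      case True then show ?thesis using K by simp
    next
      case False
      then have "norm (?S y) > 0" by simp
      then show ?thesis using h by (simp add: power2_eq_square)
    qed
  qed
  show ?thesis unfolding bounded_clinear_def clinear_def using add scal bd by blast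
qed




subclass (in chilbert_space) banach ..

lemma closed_graph:
  fixes C :: "'a::banach \<Rightarrow> 'b::banach"
  assumes lin: "linear C"
    and cg: "\<And>xs x y. xs \<longlonglongrightarrow> x \<Longrightarrow> (\<lambda>n. C (xs n)) \<longlonglongrightarrow> y \<Longrightarrow> y = C x"
  shows "\<exists>K. \<forall>x. norm (C x) \<le> norm x * K"
proof -
  define S where "S = (\<lambda>n::nat. {x. norm (C x) \<le> real n})"
  define F where "F = (\<lambda>n. closure (S n))"
  have cover: "\<Union>(range F) = UNIV"
  proof -
    have "x \<in> F (nat \<lceil>norm (C x)\<rceil>)" for x
      using closure_subset[of "S (nat \<lceil>norm (C x)\<rceil>)"] real_nat_ceiling_ge[of "norm (C x)"]
      unfolding F_def S_def by auto
    then show ?thesis by blast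
  qed
  have "\<exists>n. interior (F n) \<noteq> {}"
  proof (rule ccontr)
    assume "\<not> ?thesis"
    then have "Met_TC.mtopology interior_of \<Union>(range F) = {}"
      by (intro Met_TC.metric_Baire_category_alt) (auto simp: F_def complete_UNIV)
    then show False by (simp add: cover)
  qed
  then obtain n x0 where "x0 \<in> interior (F n)" by blast
  then obtain r where r: "r > 0" "ball x0 r \<subseteq> F n" using mem_interior by blast
  define L where "L = 2 * real n"
  have L0: "L \<ge> 0" by (simp add: L_def)
  have approx: "\<exists>a. norm (C a) \<le> L \<and> norm (z - a) < \<epsilon>" if z: "norm z < r" and e: "\<epsilon> > 0" for z \<epsilon>
  proof -
    have "x0 + z \<in> F n" "x0 \<in> F n" using r z by (auto simp: dist_norm)
    moreover have "\<epsilon> / 2 > 0" using e by simp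
    ultimately obtain p q where p: "p \<in> S n" "dist p (x0 + z) < \<epsilon> / 2"
      and q: "q \<in> S n" "dist q x0 < \<epsilon> / 2"
      unfolding F_def closure_approachable by meson
    have "norm (C (p - q)) \<le> norm (C p) + norm (C q)"
      by (simp add: linear_diff[OF lin] norm_triangle_ineq4)
    also have "\<dots> \<le> L" using p(1) q(1) by (simp add: S_def L_def)
    finally have 1: "norm (C (p - q)) \<le> L" .
    have "z - (p - q) = (x0 + z - p) - (x0 - q)" by (simp add: algebra_simps)
    then have "norm (z - (p - q)) \<le> norm (x0 + z - p) + norm (x0 - q)"
      by (metis norm_triangle_ineq4)
    also have "\<dots> < \<epsilon>" using p(2) q(2) by (simp add: dist_norm norm_minus_commute)
    finally show ?thesis using 1 by blast
  qed
  have approx2: "\<exists>a. norm (C a) \<le> L * t \<and> norm (z - a) < \<epsilon>"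
    if z: "norm z < r * t" and e: "\<epsilon> > 0" and t: "t > 0" for z \<epsilon> t
  proof -
    have "norm ((1/t) *\<^sub>R z) < r" using z t by (simp add: field_simps)
    from approx[OF this, of "\<epsilon> / t"] e t obtain a
      where a: "norm (C a) \<le> L" "norm ((1/t) *\<^sub>R z - a) < \<epsilon> / t" by auto
    have "norm (C (t *\<^sub>R a)) = t * norm (C a)" using t by (simp add: linear_scale[OF lin])
    also have "\<dots> \<le> L * t" using a(1) t by (simp add: mult.commute)
    finally have 1: "norm (C (t *\<^sub>R a)) \<le> L * t" .
    have "z - t *\<^sub>R a = t *\<^sub>R ((1/t) *\<^sub>R z - a)" using t by (simp add: algebra_simps)
    then have "norm (z - t *\<^sub>R a) = t * norm ((1/t) *\<^sub>R z - a)" using t by simp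
    also have "\<dots> < \<epsilon>" using a(2) t by (simp add: field_simps)
    finally show ?thesis using 1 by blast
  qed
  have "\<forall>k y. \<exists>a. norm y < r * (1/2)^k \<longrightarrow>
          norm (C a) \<le> L * (1/2)^k \<and> norm (y - a) < r * (1/2)^(Suc k)"
  proof (intro allI)
    fix k y
    show "\<exists>a. norm y < r * (1/2)^k \<longrightarrow>
          norm (C a) \<le> L * (1/2)^k \<and> norm (y - a) < r * (1/2)^(Suc k)"
    proof (cases "norm y < r * (1/2)^k")
      case True
      have "r * (1/2)^(Suc k) > 0" using r by simp
      from approx2[OF True this] show ?thesis by auto
    qed auto
  qed
  then obtain g where g: "\<And>k y. norm y < r * (1/2)^k \<Longrightarrow>
          norm (C (g k y)) \<le> L * (1/2)^k \<and> norm (y - g k y) < r * (1/2)^(Suc k)"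
    by metis
  have bnd: "norm (C z) \<le> 2 * L" if z: "norm z < r" for z
  proof -
    define zs where "zs = rec_nat z (\<lambda>k y. y - g k y)"
    have zs0: "zs 0 = z" and zsS: "\<And>k. zs (Suc k) = zs k - g k (zs k)"
      by (simp_all add: zs_def)
    have zsb: "norm (zs k) < r * (1/2)^k" for k
    proof (induction k)
      case 0 then show ?case using z by (simp add: zs0)
    next
      case (Suc k) then show ?case using g[of "zs k" k] by (simp only: zsS)
    qed
    define a where "a k = g k (zs k)" for k
    have aC: "norm (C (a k)) \<le> L * (1/2)^k" for k unfolding a_def using g[OF zsb[of k]] by simp
    have psum: "(\<Sum>k<m. a k) = z - zs m" for m
      by (induction m) (simp_all add: zs0 zsS a_def)
    have Cpsum: "(\<Sum>k<m. C (a k)) = C (z - zs m)" for m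
      using linear_sum[OF lin, of a "{..<m}"] psum by simp
    have sg: "summable (\<lambda>k. L * (1/2::real)^k)"
      by (intro summable_mult summable_geometric) simp
    have summ: "summable (\<lambda>k. C (a k))"
      by (rule summable_comparison_test'[OF sg]) (rule aC)
    have lim1: "(\<lambda>m. C (z - zs m)) \<longlonglongrightarrow> (\<Sum>k. C (a k))"
      using summable_LIMSEQ[OF summ] Cpsum by simp
    have "zs \<longlonglongrightarrow> 0"
    proof (rule Lim_null_comparison[where g = "\<lambda>k. r * (1/2)^k"])
      show "\<forall>\<^sub>F k in sequentially. norm (zs k) \<le> r * (1/2)^k"
        by (rule always_eventually) (use zsb less_imp_le in blast)
      show "(\<lambda>k. r * (1/2::real)^k) \<longlonglongrightarrow> 0"
        by (intro tendsto_mult_right_zero LIMSEQ_power_zero) simp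
    qed
    then have lim2: "(\<lambda>m. z - zs m) \<longlonglongrightarrow> z"
      using tendsto_diff[OF tendsto_const, of zs 0 sequentially z] by simp
    have eq: "(\<Sum>k. C (a k)) = C z" by (rule cg[OF lim2 lim1])
    have ps: "norm (\<Sum>k<m. C (a k)) \<le> 2 * L" for m
    proof -
      have "norm (\<Sum>k<m. C (a k)) \<le> (\<Sum>k<m. norm (C (a k)))" by (rule norm_sum)
      also have "\<dots> \<le> (\<Sum>k<m. L * (1/2)^k)" by (intro sum_mono aC)
      also have "\<dots> \<le> (\<Sum>k. L * (1/2::real)^k)"
        by (rule sum_le_suminf[OF sg]) (use L0 in auto)
      also have "\<dots> = L * (\<Sum>k. (1/2::real)^k)"
        by (rule suminf_mult) (intro summable_geometric, simp)
      also have "\<dots> = 2 * L" by (simp add: suminf_geometric)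
      finally show ?thesis .
    qed
    have "norm (\<Sum>k. C (a k)) \<le> 2 * L"
      by (rule LIMSEQ_le_const2[OF tendsto_norm[OF summable_LIMSEQ[OF summ]]]) (use ps in auto)
    then show ?thesis by (simp add: eq)
  qed
  have "norm (C x) \<le> norm x * (4 * L / r)" for x
  proof (cases "x = 0")
    case True then show ?thesis by (simp add: linear_0[OF lin])
  next
    case False
    define t where "t = r / (2 * norm x)"
    have t: "t > 0" using r False by (simp add: t_def)
    have "norm (t *\<^sub>R x) < r" using r False t by (simp add: t_def)
    then have "norm (C (t *\<^sub>R x)) \<le> 2 * L" by (rule bnd)
    then have "t * norm (C x) \<le> 2 * L" using t by (simp add: linear_scale[OF lin])
    then have "norm (C x) \<le> 2 * L / t" using t by (simp add: field_simps)
    also have "\<dots> = norm x * (4 * L / r)" using r False by (simp add: t_def field_simps)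
    finally show ?thesis .
  qed
  then show ?thesis by blast
qed




lemma scaleC_bounded_linear: "bounded_linear (\<lambda>v::'a::complex_inner. c *\<^sub>C v)"
  by (rule bounded_linear_intro[where K="cmod c"])
     (auto simp: scaleC_add_right scaleR_scaleC scaleC_scaleC mult.commute norm_scaleC)

lemma cinner_left_bounded_linear: "bounded_linear (\<lambda>v::'a::complex_inner. cinner v u)"
  by (rule bounded_linear_intro[where K="norm u"])
     (auto simp: cinner_add_left scaleR_scaleC cinner_scaleC_left scaleR_conv_of_real cinner_CS)

lemma closure_csubspace:
  fixes M :: "'a::complex_inner set"
  assumes "csubspace M"
  shows "csubspace (closure M)"
proof -
  have M0: "0 \<in> M" and Madd: "\<And>x y. x \<in> M \<Longrightarrow> y \<in> M \<Longrightarrow> x + y \<in> M"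
    and Mscal: "\<And>c x. x \<in> M \<Longrightarrow> c *\<^sub>C x \<in> M"
    using assms by (auto simp: csubspace_def)
  have "x + y \<in> closure M" if hx: "x \<in> closure M" and hy: "y \<in> closure M" for x y
  proof -
    obtain xs where "\<forall>n. xs n \<in> M" "xs \<longlonglongrightarrow> x"
      using hx unfolding closure_sequential by blast
    moreover obtain ys where "\<forall>n. ys n \<in> M" "ys \<longlonglongrightarrow> y"
      using hy unfolding closure_sequential by blast
    ultimately show ?thesis unfolding closure_sequential
      by (intro exI[of _ "\<lambda>n. xs n + ys n"]) (auto intro: Madd tendsto_add)
  qed
  moreover have "c *\<^sub>C x \<in> closure M" if hx: "x \<in> closure M" for c x
  proof -
    obtain xs where "\<forall>n. xs n \<in> M" "xs \<longlonglongrightarrow> x"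
      using hx unfolding closure_sequential by blast
    then show ?thesis unfolding closure_sequential
      by (intro exI[of _ "\<lambda>n. c *\<^sub>C xs n"])
         (auto intro: Mscal bounded_linear.tendsto[OF scaleC_bounded_linear])
  qed
  moreover have "0 \<in> closure M" using M0 closure_subset by blast
  ultimately show ?thesis by (auto simp: csubspace_def)
qed

context
  fixes A T :: "'a::chilbert_space \<Rightarrow> 'a"
  assumes posA: "positive_op A" and TBA: "T \<in> BA A"
begin

lemma T_bcl: "bounded_clinear T"
  using TBA by (simp add: BA_def)

lemma T_lin: "clinear T"
  using T_bcl by (rule bounded_clinear_clinear)

lemma S_bcl: "bounded_clinear (cadjoint T)"
  using T_bcl by (rule cadjoint_bcl)

lemma S_lin: "clinear (cadjoint T)"
  using S_bcl by (rule bounded_clinear_clinear)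

lemma range_ST: "cadjoint T (A x) \<in> range A"
  using TBA by (auto simp: BA_def)

lemma csub_M: "csubspace (closure (range A))"
proof (rule closure_csubspace)
  have l: "clinear A" by (rule A_lin[OF posA])
  have "0 \<in> range A" using clinear_0[OF l] by (metis rangeI)
  moreover have "A x + A y \<in> range A" for x y using clinear_add[OF l, of x y] by (metis rangeI)
  moreover have "c *\<^sub>C A x \<in> range A" for c x using clinear_scaleC[OF l, of c x] by (metis rangeI)
  ultimately show "csubspace (range A)" unfolding csubspace_def by blast
qed

lemma M_uniq: "u \<in> closure (range A) \<Longrightarrow> A u = 0 \<Longrightarrow> u = 0"
proof -
  assume uM: "u \<in> closure (range A)" and Au: "A u = 0"
  have "closure (range A) \<subseteq> {v. cinner v u = 0}"
  proof (rule closure_minimal)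
    show "range A \<subseteq> {v. cinner v u = 0}"
      using Au by (auto simp: A_herm[OF posA])
    show "closed {v. cinner v u = 0}"
      by (rule closed_Collect_eq) (auto intro: linear_continuous_on cinner_left_bounded_linear)
  qed
  then have "cinner u u = 0" using uM by blast
  then show ?thesis by (simp add: cinner_eq_zero_iff)
qed

lemma M_exists: "\<exists>u. u \<in> closure (range A) \<and> A u = cadjoint T (A x)"
proof -
  obtain w where w: "cadjoint T (A x) = A w" using range_ST by blast
  obtain m where mM: "m \<in> closure (range A)"
    and orth: "\<And>v. v \<in> closure (range A) \<Longrightarrow> cinner (w - m) v = 0"
    using projection[OF closed_closure csub_M, of w] by blast
  have "cinner (A (w - m)) (A (w - m)) = 0"
    using orth[of "A (A (w - m))"] closure_subset[of "range A"] by (auto simp: A_herm[OF posA])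
  then have "A (w - m) = 0" by (simp add: cinner_eq_zero_iff)
  then have "A m = A w" by (simp add: clinear_diff[OF A_lin[OF posA]])
  then show ?thesis using mM w by auto
qed

definition Xop :: "'a \<Rightarrow> 'a" where
  "Xop x = (SOME u. u \<in> closure (range A) \<and> A u = cadjoint T (A x))"

lemma Xop_M: "Xop x \<in> closure (range A)" and Xop_eq: "A (Xop x) = cadjoint T (A x)"
  using someI_ex[OF M_exists[of x]] by (simp_all add: Xop_def)

lemma M_eq: "u \<in> closure (range A) \<Longrightarrow> v \<in> closure (range A) \<Longrightarrow> A u = A v \<Longrightarrow> u = v"
proof -
  assume u: "u \<in> closure (range A)" and v: "v \<in> closure (range A)" and e: "A u = A v"
  have "(-1) *\<^sub>C v \<in> closure (range A)" using csub_M v by (simp add: csubspace_def)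
  then have "u + (-1) *\<^sub>C v \<in> closure (range A)" using csub_M u by (simp add: csubspace_def)
  then have "u - v \<in> closure (range A)" by (simp add: scaleC_minus1)
  moreover have "A (u - v) = 0" using e by (simp add: clinear_diff[OF A_lin[OF posA]])
  ultimately have "u - v = 0" by (rule M_uniq)
  then show "u = v" by simp
qed

lemma Xop_add: "Xop (x + y) = Xop x + Xop y"
proof (rule M_eq)
  show "Xop (x + y) \<in> closure (range A)" by (rule Xop_M)
  show "Xop x + Xop y \<in> closure (range A)"
    using csub_M Xop_M[of x] Xop_M[of y] unfolding csubspace_def by blast
  have "A (Xop (x + y)) = cadjoint T (A x) + cadjoint T (A y)"
    by (simp only: Xop_eq clinear_add[OF A_lin[OF posA]] clinear_add[OF S_lin])
  also have "\<dots> = A (Xop x + Xop y)"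
    by (simp only: Xop_eq clinear_add[OF A_lin[OF posA]])
  finally show "A (Xop (x + y)) = A (Xop x + Xop y)" .
qed

lemma Xop_scaleC: "Xop (c *\<^sub>C x) = c *\<^sub>C Xop x"
proof (rule M_eq)
  show "Xop (c *\<^sub>C x) \<in> closure (range A)" by (rule Xop_M)
  show "c *\<^sub>C Xop x \<in> closure (range A)"
    using csub_M Xop_M[of x] unfolding csubspace_def by blast
  have "A (Xop (c *\<^sub>C x)) = c *\<^sub>C cadjoint T (A x)"
    by (simp only: Xop_eq clinear_scaleC[OF A_lin[OF posA]] clinear_scaleC[OF S_lin])
  also have "\<dots> = A (c *\<^sub>C Xop x)"
    by (simp only: Xop_eq clinear_scaleC[OF A_lin[OF posA]])
  finally show "A (Xop (c *\<^sub>C x)) = A (c *\<^sub>C Xop x)" .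
qed

lemma Xop_clinear: "clinear Xop"
  by (simp add: clinear_def Xop_add Xop_scaleC)

lemma Xop_bcl: "bounded_clinear Xop"
proof -
  have lin: "linear Xop"
    by (rule linearI) (simp_all add: Xop_add clinear_scaleR[OF Xop_clinear])
  have "\<exists>K. \<forall>x. norm (Xop x) \<le> norm x * K"
  proof (rule closed_graph[OF lin])
    fix xs x y
    assume xs: "xs \<longlonglongrightarrow> x" and Xxs: "(\<lambda>n. Xop (xs n)) \<longlonglongrightarrow> y"
    have yM: "y \<in> closure (range A)"
      by (rule closed_sequentially[OF closed_closure _ Xxs]) (rule Xop_M)
    have l1: "(\<lambda>n. A (Xop (xs n))) \<longlonglongrightarrow> A y"
      by (rule bounded_clinear_tendsto[OF A_bcl[OF posA] Xxs])
    have l2: "(\<lambda>n. A (Xop (xs n))) \<longlonglongrightarrow> cadjoint T (A x)"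
      unfolding Xop_eq
      by (rule bounded_clinear_tendsto[OF S_bcl bounded_clinear_tendsto[OF A_bcl[OF posA] xs]])
    have "A y = A (Xop x)" using LIMSEQ_unique[OF l1 l2] by (simp add: Xop_eq)
    then show "y = Xop x" by (rule M_eq[OF yM Xop_M])
  qed
  then show ?thesis using Xop_clinear by (simp add: bounded_clinear_def)
qed

lemma Asharp_eq: "Asharp A T = Xop"
  unfolding Asharp_def
proof (rule the_equality)
  show "bounded_clinear Xop \<and> (\<forall>x. A (Xop x) = cadjoint T (A x)) \<and> range Xop \<subseteq> closure (range A)"
    using Xop_bcl Xop_eq Xop_M by blast
next
  fix Y assume "bounded_clinear Y \<and> (\<forall>x. A (Y x) = cadjoint T (A x)) \<and> range Y \<subseteq> closure (range A)"
  then have Y: "\<And>x. Y x \<in> closure (range A)" "\<And>x. A (Y x) = cadjoint T (A x)" by auto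
  show "Y = Xop"
  proof
    fix x show "Y x = Xop x" by (rule M_eq[OF Y(1) Xop_M]) (simp add: Y(2) Xop_eq)
  qed
qed

lemma sharp_bcl: "bounded_clinear (Asharp A T)"
  by (simp add: Asharp_eq Xop_bcl)

lemma sharp_adj: "cinner (A (Asharp A T x)) y = cinner (A x) (T y)"
proof -
  have "cinner (A (Asharp A T x)) y = cinner (cadjoint T (A x)) y" by (simp add: Asharp_eq Xop_eq)
  also have "\<dots> = cnj (cinner y (cadjoint T (A x)))" by (rule cinner_commute)
  also have "\<dots> = cnj (cinner (T y) (A x))" by (simp add: cadjoint_prop[OF T_bcl])
  also have "\<dots> = cinner (A x) (T y)" by (simp add: cinner_commute[of "A x"])
  finally show ?thesis .
qed

end




context
  fixes A T :: "'a::chilbert_space \<Rightarrow> 'a"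
  assumes posA: "positive_op A" and TBA: "T \<in> BA A"
begin

definition Pop :: "'a \<Rightarrow> 'a" where "Pop x = Asharp A T (T x)"

lemma Pop_form: "cinner (A (Pop u)) v = cinner (A (T u)) (T v)"
  unfolding Pop_def by (rule sharp_adj[OF posA TBA])

lemma Pop_sa: "cinner (A (Pop u)) v = cinner (A u) (Pop v)"
proof -
  have "cinner (A u) (Pop v) = cnj (cinner (A (Pop v)) u)" by (rule A_form_herm[OF posA])
  also have "\<dots> = cnj (cinner (A (T v)) (T u))" by (simp add: Pop_form)
  also have "\<dots> = cinner (A (T u)) (T v)" by (simp add: A_form_herm[OF posA, of "T u"])
  finally show ?thesis by (simp add: Pop_form)
qed

lemma Pop_pow_sa: "cinner (A ((Pop ^^ n) u)) v = cinner (A u) ((Pop ^^ n) v)"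
proof (induction n arbitrary: v)
  case 0 then show ?case by simp
next
  case (Suc n)
  have "cinner (A ((Pop ^^ Suc n) u)) v = cinner (A (Pop ((Pop ^^ n) u))) v" by simp
  also have "\<dots> = cinner (A ((Pop ^^ n) u)) (Pop v)" by (rule Pop_sa)
  also have "\<dots> = cinner (A u) ((Pop ^^ n) (Pop v))" by (rule Suc.IH)
  also have "\<dots> = cinner (A u) ((Pop ^^ Suc n) v)" by (simp add: funpow_swap1)
  finally show ?case .
qed

lemma Pop_bcl: "bounded_clinear Pop"
proof -
  obtain K1 where K1: "K1 > 0" "\<And>x. norm (T x) \<le> norm x * K1"
    using T_bcl[OF posA TBA] bounded_clinear_bound by blast
  obtain K2 where K2: "K2 > 0" "\<And>x. norm (Asharp A T x) \<le> norm x * K2"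
    using sharp_bcl[OF posA TBA] bounded_clinear_bound by blast
  have "norm (Pop x) \<le> norm x * (K1 * K2)" for x
  proof -
    have "norm (Pop x) \<le> norm (T x) * K2" unfolding Pop_def by (rule K2(2))
    also have "\<dots> \<le> norm x * K1 * K2" using K1(2)[of x] K2(1) by (simp add: mult_right_mono)
    finally show ?thesis by (simp add: mult.assoc)
  qed
  moreover have "clinear Pop"
    using T_lin[OF posA TBA] bounded_clinear_clinear[OF sharp_bcl[OF posA TBA]]
    by (simp add: clinear_def Pop_def)
  ultimately show ?thesis unfolding bounded_clinear_def by blast
qed

lemma Pop_pow_norm:
  assumes K: "K > 0" "\<And>x. norm (Pop x) \<le> norm x * K"
  shows "norm ((Pop ^^ n) x) \<le> K ^ n * norm x"
proof (induction n)
  case 0 then show ?case by simp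
next
  case (Suc n)
  have "norm ((Pop ^^ Suc n) x) = norm (Pop ((Pop ^^ n) x))" by simp
  also have "\<dots> \<le> norm ((Pop ^^ n) x) * K" by (rule K(2))
  also have "\<dots> \<le> K ^ n * norm x * K" using Suc.IH K(1) by (simp add: mult_right_mono)
  finally show ?case by (simp add: algebra_simps)
qed

lemma Pop_unit_bound:
  assumes K: "K > 0" "\<And>x. norm (Pop x) \<le> norm x * K"
    and x1: "A_norm A x = 1"
  shows "A_norm A (Pop x) \<le> K"
proof (rule ccontr)
  assume "\<not> ?thesis"
  then have bK: "A_norm A (Pop x) > K" by simp
  define b where "b = A_norm A (Pop x)"
  define a where "a n = A_norm A ((Pop ^^ n) x)" for n
  have a_sq: "(a n)\<^sup>2 \<le> a (2 * n)" for n
  proof -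
    have "(a n)\<^sup>2 = Re (cinner (A ((Pop ^^ n) x)) ((Pop ^^ n) x))"
      by (simp add: a_def A_norm_sq[OF posA])
    also have "cinner (A ((Pop ^^ n) x)) ((Pop ^^ n) x) = cinner (A ((Pop ^^ n) ((Pop ^^ n) x))) x"
      by (rule Pop_pow_sa[symmetric])
    also have "(Pop ^^ n) ((Pop ^^ n) x) = (Pop ^^ (2 * n)) x"
      by (simp add: funpow_add mult_2)
    also have "Re (cinner (A ((Pop ^^ (2 * n)) x)) x) \<le> cmod (cinner (A ((Pop ^^ (2 * n)) x)) x)"
      by (rule complex_Re_le_cmod)
    also have "\<dots> \<le> A_norm A ((Pop ^^ (2 * n)) x) * A_norm A x" by (rule A_CS[OF posA])
    finally show ?thesis by (simp add: a_def x1)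
  qed
  have b0: "b \<ge> 0" by (simp add: b_def A_norm_nonneg[OF posA])
  have pw: "b ^ (2 ^ k) \<le> a (2 ^ k)" for k
  proof (induction k)
    case 0 then show ?case by (simp add: a_def b_def)
  next
    case (Suc k)
    have "b ^ (2 ^ Suc k) = (b ^ (2 ^ k))\<^sup>2" by (simp add: power_mult[symmetric] mult.commute)
    also have "\<dots> \<le> (a (2 ^ k))\<^sup>2" using Suc.IH b0 by (intro power_mono) auto
    also have "\<dots> \<le> a (2 * 2 ^ k)" by (rule a_sq)
    finally show ?case by simp
  qed
  obtain CA where CA: "CA > 0" "\<And>u. A_norm A u \<le> CA * norm u"
    using A_norm_le[OF posA] by blast
  have "a m \<le> CA * norm x * K ^ m" for m
  proof -
    have "a m \<le> CA * norm ((Pop ^^ m) x)" unfolding a_def by (rule CA(2))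
    also have "\<dots> \<le> CA * (K ^ m * norm x)" using CA(1) Pop_pow_norm[OF K] by (simp add: mult_left_mono)
    finally show ?thesis by (simp add: algebra_simps)
  qed
  then have "b ^ (2 ^ k) \<le> CA * norm x * K ^ (2 ^ k)" for k using pw order_trans by blast
  then have hk: "(b / K) ^ (2 ^ k) \<le> CA * norm x" for k
    using K(1) by (simp add: power_divide divide_le_eq)
  have "1 < b / K" using bK K(1) by (simp add: b_def)
  then obtain n where n: "CA * norm x < (b / K) ^ n" using real_arch_pow by blast
  also have "\<dots> \<le> (b / K) ^ (2 ^ n)"
    using \<open>1 < b / K\<close> less_exp[of n] by (intro power_increasing) auto
  also have "\<dots> \<le> CA * norm x" by (rule hk)
  finally show False by simp
qed

lemma T_A_bound: "\<exists>KK\<ge>0. \<forall>x. A_norm A (T x) \<le> KK * A_norm A x"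
proof -
  obtain K where K: "K > 0" "\<And>x. norm (Pop x) \<le> norm x * K"
    using Pop_bcl bounded_clinear_bound by blast
  have sq: "(A_norm A (T x))\<^sup>2 \<le> A_norm A (Pop x) * A_norm A x" for x
  proof -
    have "(A_norm A (T x))\<^sup>2 = Re (cinner (A (Pop x)) x)"
      by (simp add: A_norm_sq[OF posA] Pop_form)
    also have "\<dots> \<le> cmod (cinner (A (Pop x)) x)" by (rule complex_Re_le_cmod)
    also have "\<dots> \<le> A_norm A (Pop x) * A_norm A x" by (rule A_CS[OF posA])
    finally show ?thesis .
  qed
  have "A_norm A (T x) \<le> sqrt K * A_norm A x" for x
  proof (cases "A_norm A x = 0")
    case True
    then have "(A_norm A (T x))\<^sup>2 \<le> 0" using sq[of x] by simp
    then show ?thesis using True by simp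
  next
    case False
    define t where "t = A_norm A x"
    have t: "t > 0" using False A_norm_nonneg[OF posA, of x] by (simp add: t_def)
    define x' where "x' = complex_of_real (1 / t) *\<^sub>C x"
    have x'1: "A_norm A x' = 1" using t by (simp add: x'_def A_norm_scaleC[OF posA] t_def norm_divide)
    have Tx': "A_norm A (T x') = A_norm A (T x) / t"
      using t by (simp add: x'_def clinear_scaleC[OF T_lin[OF posA TBA]] A_norm_scaleC[OF posA] norm_divide)
    have "(A_norm A (T x'))\<^sup>2 \<le> K"
      using sq[of x'] Pop_unit_bound[OF K x'1] x'1 by simp
    then have "A_norm A (T x') \<le> sqrt K"
      using A_norm_nonneg[OF posA, of "T x'"] real_le_rsqrt by blast
    then have "A_norm A (T x) / t \<le> sqrt K" by (simp add: Tx')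
    then show ?thesis using t by (simp add: t_def divide_le_eq mult.commute)
  qed
  then show ?thesis using K(1) by (intro exI[of _ "sqrt K"]) auto
qed

end




lemma KKab: "0 \<le> (KK::real) \<Longrightarrow> 0 \<le> a \<Longrightarrow> a \<le> 1 \<Longrightarrow> 0 \<le> b \<Longrightarrow> b \<le> 1 \<Longrightarrow> KK * a * b \<le> KK"
proof -
  assume h: "0 \<le> KK" "0 \<le> a" "a \<le> 1" "0 \<le> b" "b \<le> 1"
  then have "a * b \<le> 1" by (simp add: mult_le_one)
  then have "KK * (a * b) \<le> KK * 1" using h(1) by (rule mult_left_mono)
  then show ?thesis by (simp add: mult.assoc)
qed

context
  fixes A T :: "'a::chilbert_space \<Rightarrow> 'a"
  assumes posA: "positive_op A" and TBA: "T \<in> BA A"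
begin

lemma X_lin: "clinear (Asharp A T)"
  by (rule bounded_clinear_clinear[OF sharp_bcl[OF posA TBA]])

lemma R_form: "cinner (A (ReA A T u)) v = (1/2) * (cinner (A (T u)) v + cinner (A u) (T v))"
  unfolding ReA_def
  by (simp add: clinear_scaleC[OF A_lin[OF posA]] clinear_add[OF A_lin[OF posA]]
      cinner_scaleC_left cinner_add_left sharp_adj[OF posA TBA])

lemma I_form: "cinner (A (ImA A T u)) v = (1 / (2 * \<i>)) * (cinner (A (T u)) v - cinner (A u) (T v))"
  unfolding ImA_def
  by (simp only: clinear_scaleC[OF A_lin[OF posA]] clinear_diff[OF A_lin[OF posA]]
      cinner_scaleC_left cinner_diff_left sharp_adj[OF posA TBA])

lemma RI_bnd: "\<exists>KK\<ge>0. \<forall>u v. cmod (cinner (A (ReA A T u)) v) \<le> KK * A_norm A u * A_norm A v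
                  \<and> cmod (cinner (A (ImA A T u)) v) \<le> KK * A_norm A u * A_norm A v"
proof -
  obtain KK where KK: "KK \<ge> 0" "\<And>x. A_norm A (T x) \<le> KK * A_norm A x"
    using T_A_bound[OF posA TBA] by blast
  have b1: "cmod (cinner (A (T u)) v) \<le> KK * A_norm A u * A_norm A v" for u v
  proof -
    have "cmod (cinner (A (T u)) v) \<le> A_norm A (T u) * A_norm A v" by (rule A_CS[OF posA])
    also have "\<dots> \<le> KK * A_norm A u * A_norm A v"
      using KK(2)[of u] A_norm_nonneg[OF posA, of v] by (simp add: mult_right_mono)
    finally show ?thesis .
  qed
  have b2: "cmod (cinner (A u) (T v)) \<le> KK * A_norm A u * A_norm A v" for u v
  proof -
    have "cmod (cinner (A u) (T v)) \<le> A_norm A u * A_norm A (T v)" by (rule A_CS[OF posA])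
    also have "\<dots> \<le> A_norm A u * (KK * A_norm A v)"
      using KK(2)[of v] A_norm_nonneg[OF posA, of u] by (simp add: mult_left_mono)
    finally show ?thesis by (simp add: algebra_simps)
  qed
  have "cmod (cinner (A (ReA A T u)) v) \<le> KK * A_norm A u * A_norm A v" for u v
  proof -
    have "cmod (cinner (A (ReA A T u)) v) \<le> (1/2) * (cmod (cinner (A (T u)) v) + cmod (cinner (A u) (T v)))"
      unfolding R_form by (simp add: norm_mult norm_triangle_ineq)
    then show ?thesis using b1[of u v] b2[of u v] by simp
  qed
  moreover have "cmod (cinner (A (ImA A T u)) v) \<le> KK * A_norm A u * A_norm A v" for u v
  proof -
    have "cmod (cinner (A (ImA A T u)) v) \<le> (1/2) * (cmod (cinner (A (T u)) v) + cmod (cinner (A u) (T v)))"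
      unfolding I_form by (simp add: norm_mult norm_divide norm_triangle_ineq4)
    then show ?thesis using b1[of u v] b2[of u v] by simp
  qed
  ultimately show ?thesis using KK(1) by blast
qed

lemma AA_norm_1:
  assumes "AA_norm A y = 1"
  shows "(A_norm A (fst y))\<^sup>2 + (A_norm A (snd y))\<^sup>2 = 1"
    and "A_norm A (fst y) \<le> 1" and "A_norm A (snd y) \<le> 1"
proof -
  have e: "Re (AA_inner A y y) = (A_norm A (fst y))\<^sup>2 + (A_norm A (snd y))\<^sup>2"
    by (simp add: AA_inner_def A_inner_def A_norm_sq[OF posA])
  have "0 \<le> Re (AA_inner A y y)" unfolding e by simp
  then show h: "(A_norm A (fst y))\<^sup>2 + (A_norm A (snd y))\<^sup>2 = 1"
    using assms unfolding AA_norm_def e by simp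
  show "A_norm A (fst y) \<le> 1"
    using h A_norm_nonneg[OF posA, of "fst y"] by (smt (verit) power2_le_imp_le zero_le_power2 one_power2)
  show "A_norm A (snd y) \<le> 1"
    using h A_norm_nonneg[OF posA, of "snd y"] by (smt (verit) power2_le_imp_le zero_le_power2 one_power2)
qed

lemma bdd1: "bdd_above {cmod (AA_inner A (opmat (ReA A T) (\<lambda>_. 0) (ImA A T) (\<lambda>_. 0) y) y) | y. AA_norm A y = 1}"
proof -
  obtain KK where KK: "KK \<ge> 0" "\<And>u v. cmod (cinner (A (ReA A T u)) v) \<le> KK * A_norm A u * A_norm A v"
     "\<And>u v. cmod (cinner (A (ImA A T u)) v) \<le> KK * A_norm A u * A_norm A v"
    using RI_bnd by blast
  have "cmod (AA_inner A (opmat (ReA A T) (\<lambda>_. 0) (ImA A T) (\<lambda>_. 0) y) y) \<le> 2 * KK"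
    if "AA_norm A y = 1" for y
  proof -
    obtain y1 y2 where y: "y = (y1, y2)" by (cases y)
    have a: "A_norm A y1 \<le> 1" "A_norm A y2 \<le> 1" "0 \<le> A_norm A y1" "0 \<le> A_norm A y2"
      using AA_norm_1[OF that] A_norm_nonneg[OF posA] by (auto simp: y)
    have "AA_inner A (opmat (ReA A T) (\<lambda>_. 0) (ImA A T) (\<lambda>_. 0) y) y
        = cinner (A (ReA A T y1)) y1 + cinner (A (ImA A T y1)) y2"
      by (simp add: y opmat_def AA_inner_def A_inner_def)
    then have "cmod (AA_inner A (opmat (ReA A T) (\<lambda>_. 0) (ImA A T) (\<lambda>_. 0) y) y)
        \<le> KK * A_norm A y1 * A_norm A y1 + KK * A_norm A y1 * A_norm A y2"
      using KK(2)[of y1 y1] KK(3)[of y1 y2] norm_triangle_ineq[of "cinner (A (ReA A T y1)) y1" "cinner (A (ImA A T y1)) y2"]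
      by simp
    also have "\<dots> \<le> KK * 1 + KK * 1"
      using a KK(1) by (intro add_mono) (simp_all add: KKab)
    finally show ?thesis by simp
  qed
  then show ?thesis by (intro bdd_aboveI[of _ "2 * KK"]) blast
qed

lemma bdd2: "bdd_above {cmod (AA_inner A (opmat (\<lambda>_. 0) (\<lambda>x. (- \<i>) *\<^sub>C ImA A T x) (ReA A T) (\<lambda>_. 0) y) y) | y. AA_norm A y = 1}"
proof -
  obtain KK where KK: "KK \<ge> 0" "\<And>u v. cmod (cinner (A (ReA A T u)) v) \<le> KK * A_norm A u * A_norm A v"
     "\<And>u v. cmod (cinner (A (ImA A T u)) v) \<le> KK * A_norm A u * A_norm A v"
    using RI_bnd by blast
  have "cmod (AA_inner A (opmat (\<lambda>_. 0) (\<lambda>x. (- \<i>) *\<^sub>C ImA A T x) (ReA A T) (\<lambda>_. 0) y) y) \<le> 2 * KK"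
    if "AA_norm A y = 1" for y
  proof -
    obtain y1 y2 where y: "y = (y1, y2)" by (cases y)
    have a: "A_norm A y1 \<le> 1" "A_norm A y2 \<le> 1" "0 \<le> A_norm A y1" "0 \<le> A_norm A y2"
      using AA_norm_1[OF that] A_norm_nonneg[OF posA] by (auto simp: y)
    have "AA_inner A (opmat (\<lambda>_. 0) (\<lambda>x. (- \<i>) *\<^sub>C ImA A T x) (ReA A T) (\<lambda>_. 0) y) y
        = (- \<i>) * cinner (A (ImA A T y2)) y1 + cinner (A (ReA A T y1)) y2"
      by (simp add: y opmat_def AA_inner_def A_inner_def clinear_scaleC[OF A_lin[OF posA]]
          cinner_scaleC_left)
    then have "cmod (AA_inner A (opmat (\<lambda>_. 0) (\<lambda>x. (- \<i>) *\<^sub>C ImA A T x) (ReA A T) (\<lambda>_. 0) y) y)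
        \<le> cmod ((- \<i>) * cinner (A (ImA A T y2)) y1) + cmod (cinner (A (ReA A T y1)) y2)"
      by (simp only: norm_triangle_ineq)
    also have "\<dots> = cmod (cinner (A (ImA A T y2)) y1) + cmod (cinner (A (ReA A T y1)) y2)"
      by (simp add: norm_mult)
    also have "\<dots> \<le> KK * A_norm A y2 * A_norm A y1 + KK * A_norm A y1 * A_norm A y2"
      using KK(3)[of y2 y1] KK(2)[of y1 y2] by (rule add_mono)
    also have "\<dots> \<le> KK * 1 + KK * 1"
      using a KK(1) by (intro add_mono) (simp_all add: KKab)
    finally show ?thesis by simp
  qed
  then show ?thesis by (intro bdd_aboveI[of _ "2 * KK"]) blast
qed

lemma RI_scaled:
  assumes x1: "A_norm A x = 1"
  shows "cinner (A (ReA A T (\<alpha> *\<^sub>C x))) (\<beta> *\<^sub>C x) = \<alpha> * cnj \<beta> * complex_of_real (Re (cinner (A (T x)) x))"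
    and "cinner (A (ImA A T (\<alpha> *\<^sub>C x))) (\<beta> *\<^sub>C x) = \<alpha> * cnj \<beta> * complex_of_real (Im (cinner (A (T x)) x))"
proof -
  define z where "z = cinner (A (T x)) x"
  have h: "cinner (A x) (T x) = cnj z" unfolding z_def by (rule A_form_herm[OF posA])
  have e1: "cinner (A (T (\<alpha> *\<^sub>C x))) (\<beta> *\<^sub>C x) = \<alpha> * cnj \<beta> * z"
    by (simp add: z_def clinear_scaleC[OF T_lin[OF posA TBA]] clinear_scaleC[OF A_lin[OF posA]]
        cinner_scaleC_left cinner_scaleC_right)
  have e2: "cinner (A (\<alpha> *\<^sub>C x)) (T (\<beta> *\<^sub>C x)) = \<alpha> * cnj \<beta> * cnj z"
    by (simp add: h[symmetric] clinear_scaleC[OF T_lin[OF posA TBA]] clinear_scaleC[OF A_lin[OF posA]]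
        cinner_scaleC_left cinner_scaleC_right)
  show "cinner (A (ReA A T (\<alpha> *\<^sub>C x))) (\<beta> *\<^sub>C x) = \<alpha> * cnj \<beta> * complex_of_real (Re (cinner (A (T x)) x))"
  proof -
    have "(1/2) * (\<alpha> * cnj \<beta> * z + \<alpha> * cnj \<beta> * cnj z) = \<alpha> * cnj \<beta> * ((z + cnj z) / 2)"
      by (simp add: ring_distribs)
    also have "(z + cnj z) / 2 = complex_of_real (Re z)" by (simp add: complex_add_cnj)
    finally show ?thesis unfolding R_form e1 e2 z_def[symmetric] .
  qed
  show "cinner (A (ImA A T (\<alpha> *\<^sub>C x))) (\<beta> *\<^sub>C x) = \<alpha> * cnj \<beta> * complex_of_real (Im (cinner (A (T x)) x))"
  proof -
    have "(1 / (2 * \<i>)) * (\<alpha> * cnj \<beta> * z - \<alpha> * cnj \<beta> * cnj z) = \<alpha> * cnj \<beta> * ((z - cnj z) / (2 * \<i>))"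
      by (simp add: ring_distribs)
    also have "(z - cnj z) / (2 * \<i>) = complex_of_real (Im z)" by (simp add: complex_diff_cnj complex_eq_iff)
    finally show ?thesis unfolding I_form e1 e2 z_def[symmetric] .
  qed
qed

end




theorem theorem2p20:
  fixes A T :: "'a::chilbert_space \<Rightarrow> 'a"
  assumes "positive_op A" and "A \<noteq> (\<lambda>_. 0)" and "T \<in> BA A"
  shows "omegaA A T \<le> 2 * min
           (omegaAA A (opmat (ReA A T) (\<lambda>_. 0) (ImA A T) (\<lambda>_. 0)))
           (omegaAA A (opmat (\<lambda>_. 0) (\<lambda>x. (- \<i>) *\<^sub>C ImA A T x) (ReA A T) (\<lambda>_. 0)))"
proof -
  note posA = assms(1) and TBA = assms(3)
  define M1 where "M1 = opmat (ReA A T) (\<lambda>_. 0) (ImA A T) (\<lambda>_. 0)"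
  define M2 where "M2 = opmat (\<lambda>_. 0) (\<lambda>x. (- \<i>) *\<^sub>C ImA A T x) (ReA A T) (\<lambda>_. 0)"
  define S1 where "S1 = {cmod (AA_inner A (M1 y) y) | y. AA_norm A y = 1}"
  define S2 where "S2 = {cmod (AA_inner A (M2 y) y) | y. AA_norm A y = 1}"
  have bS1: "bdd_above S1" unfolding S1_def M1_def by (rule bdd1[OF posA TBA])
  have bS2: "bdd_above S2" unfolding S2_def M2_def by (rule bdd2[OF posA TBA])
  have om1: "omegaAA A M1 = Sup S1" by (simp add: omegaAA_def S1_def)
  have om2: "omegaAA A M2 = Sup S2" by (simp add: omegaAA_def S2_def)
  define c where "c = complex_of_real (sqrt (1/2))"
  have cc: "c * cnj c = 1/2"
    by (simp add: c_def of_real_mult[symmetric] del: of_real_mult)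
  have key: "cmod (A_inner A (T x) x) \<le> 2 * omegaAA A M1 \<and> cmod (A_inner A (T x) x) \<le> 2 * omegaAA A M2"
    if x1: "A_norm A x = 1" for x
  proof -
    define z where "z = cinner (A (T x)) x"
    have Ax: "cinner (A x) x = 1" using A_inner_self[OF posA, of x] x1 by simp
    have sq: "cinner (A (\<alpha> *\<^sub>C x)) (\<beta> *\<^sub>C x) = \<alpha> * cnj \<beta>" for \<alpha> \<beta>
      by (simp add: clinear_scaleC[OF A_lin[OF posA]] cinner_scaleC_left cinner_scaleC_right Ax)
    define d where "d = c * (- \<i>)"
    have "d * cnj d = (c * cnj c) * (- \<i> * \<i>)" by (simp add: d_def mult_ac)
    then have dd: "d * cnj d = 1/2" using cc by simp
    have "c * cnj d = (c * cnj c) * \<i>" by (simp add: d_def mult_ac)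
    then have cd: "c * cnj d = \<i> / 2" using cc by simp
    note RIs = RI_scaled[OF posA TBA x1]
    define y1 where "y1 = (c *\<^sub>C x, d *\<^sub>C x)"
    have n1: "AA_norm A y1 = 1"
      by (simp add: AA_norm_def AA_inner_def A_inner_def y1_def sq cc dd)
    have "AA_inner A (M1 y1) y1 = cinner (A (ReA A T (c *\<^sub>C x))) (c *\<^sub>C x)
        + cinner (A (ImA A T (c *\<^sub>C x))) (d *\<^sub>C x)"
      by (simp add: M1_def y1_def opmat_def AA_inner_def A_inner_def)
    also have "\<dots> = z / 2"
      unfolding RIs cc cd z_def[symmetric] by (simp add: complex_eq_iff)
    finally have e1: "AA_inner A (M1 y1) y1 = z / 2" .
    have "cmod (AA_inner A (M1 y1) y1) \<in> S1" unfolding S1_def using n1 by blast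
    then have "cmod (AA_inner A (M1 y1) y1) \<le> Sup S1" using bS1 by (rule cSup_upper)
    then have r1: "cmod z \<le> 2 * omegaAA A M1" unfolding e1 om1 by (simp add: norm_divide)
    define y2 where "y2 = (c *\<^sub>C x, c *\<^sub>C x)"
    have n2: "AA_norm A y2 = 1"
      by (simp add: AA_norm_def AA_inner_def A_inner_def y2_def sq cc)
    have "AA_inner A (M2 y2) y2 = (- \<i>) * cinner (A (ImA A T (c *\<^sub>C x))) (c *\<^sub>C x)
        + cinner (A (ReA A T (c *\<^sub>C x))) (c *\<^sub>C x)"
      by (simp add: M2_def y2_def opmat_def AA_inner_def A_inner_def
          clinear_scaleC[OF A_lin[OF posA]] cinner_scaleC_left)
    also have "\<dots> = cnj z / 2"
      unfolding RIs cc z_def[symmetric] by (simp add: complex_eq_iff)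
    finally have e2: "AA_inner A (M2 y2) y2 = cnj z / 2" .
    have "cmod (AA_inner A (M2 y2) y2) \<in> S2" unfolding S2_def using n2 by blast
    then have "cmod (AA_inner A (M2 y2) y2) \<le> Sup S2" using bS2 by (rule cSup_upper)
    then have r2: "cmod z \<le> 2 * omegaAA A M2" unfolding e2 om2 by (simp add: norm_divide)
    show ?thesis using r1 r2 by (simp add: A_inner_def z_def)
  qed
  obtain x0 where x0: "A x0 \<noteq> 0" using assms(2) by blast
  have "A_norm A x0 \<noteq> 0" using x0 A_zero_if_norm0[OF posA] by blast
  then have t: "A_norm A x0 > 0" using A_norm_nonneg[OF posA, of x0] by simp
  define x1 where "x1 = complex_of_real (1 / A_norm A x0) *\<^sub>C x0"
  have "A_norm A x1 = 1" using t by (simp add: x1_def A_norm_scaleC[OF posA] norm_divide)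
  then have ne: "{cmod (A_inner A (T x) x) | x. A_norm A x = 1} \<noteq> {}" by blast
  have "omegaA A T \<le> 2 * min (omegaAA A M1) (omegaAA A M2)"
    unfolding omegaA_def
  proof (rule cSup_least[OF ne])
    fix r assume "r \<in> {cmod (A_inner A (T x) x) | x. A_norm A x = 1}"
    then obtain x where "r = cmod (A_inner A (T x) x)" "A_norm A x = 1" by blast
    then show "r \<le> 2 * min (omegaAA A M1) (omegaAA A M2)"
      using key by (simp add: min_def)
  qed
  then show ?thesis by (simp add: M1_def M2_def)
qed


end
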